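(* The retract variety $\mathbf V(\underline 2,\underline 3)$ is not principal: there is no monounary algebra $A$ with $\mathbf V(A)=\mathbf V(\underline 2,\underline 3)$.
   Context: A monounary algebra is a pair $(A,f)$ with $A$ a nonempty set and $f:A\to A$; direct products are formed coordinatewise. A retract of $A$ is a nonempty subalgebra $M$ such that there is an endomorphism $h:A\to M$ with $h(x)=x$ for all $x\in M$. A retract variety is a class of algebras closed under isomorphisms, retracts and direct products (of set-indexed families); $\mathbf V(\mathcal K)$ denotes the smallest retract variety containing $\mathcal K$, and $\mathbf V(A_1,\dots,A_n)=\mathbf V(\{A_1,\dots,A_n\})$. For $n\in\mathbb N$, $\underline n=(\mathbb Z_n,f)$ with $f(k)=k+1 \pmod n$ (an $n$-element cycle). *)

theory Defs
  imports "HOL-Library.FuncSet"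
begin

type_synonym 'a alg = "'a set \<times> ('a \<Rightarrow> 'a)"

definition monounary :: "'a alg \<Rightarrow> bool" where
  "monounary Af \<longleftrightarrow> fst Af \<noteq> {} \<and> (\<forall>x\<in>fst Af. snd Af x \<in> fst Af)"

definition cyc :: "nat \<Rightarrow> nat alg" where
  "cyc n = ({0..<n}, \<lambda>k. (k + 1) mod n)"

definition prod_alg :: "'i set \<Rightarrow> ('i \<Rightarrow> 'k alg) \<Rightarrow> ('i \<Rightarrow> 'k) alg" where
  "prod_alg I F = (PiE I (\<lambda>i. fst (F i)), \<lambda>x. \<lambda>i\<in>I. snd (F i) (x i))"

definition is_hom :: "'a alg \<Rightarrow> 'b alg \<Rightarrow> ('a \<Rightarrow> 'b) \<Rightarrow> bool" where
  "is_hom A B h \<longleftrightarrow> (\<forall>x\<in>fst A. h x \<in> fst B \<and> h (snd A x) = snd B (h x))"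

definition is_retract :: "'a alg \<Rightarrow> 'a set \<Rightarrow> bool" where
  "is_retract A M \<longleftrightarrow> M \<noteq> {} \<and> M \<subseteq> fst A \<and> (\<forall>x\<in>M. snd A x \<in> M) \<and>
     (\<exists>h. is_hom A (M, snd A) h \<and> (\<forall>x\<in>M. h x = x))"

definition iso_alg :: "'a alg \<Rightarrow> 'b alg \<Rightarrow> bool" where
  "iso_alg A B \<longleftrightarrow> (\<exists>g. bij_betw g (fst A) (fst B) \<and> is_hom A B g)"

text \<open>Since I R P(K) is the smallest retract variety V(K), B \<in> V(K) iff in_IRP K I B for
  some index set I (of some type).\<close>
definition in_IRP :: "'k alg set \<Rightarrow> 'i set \<Rightarrow> 'c alg \<Rightarrow> bool" where
  "in_IRP K I B \<longleftrightarrow> (\<exists>F. (\<forall>i\<in>I. F i \<in> K) \<and>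
      (\<exists>M. is_retract (prod_alg I F) M \<and> iso_alg B (M, snd (prod_alg I F))))"

end

theory Submission
  imports Defs
begin

lemma cyc2_elem:
  assumes mon: "monounary (A, f)" and h: "in_IRP {(A, f)} J (cyc 2)"
  shows "\<exists>a\<in>A. f a \<noteq> a \<and> f (f a) = a"
proof -
  from h obtain F M g where F: "\<forall>j\<in>J. F j \<in> {(A, f)}"
    and R: "is_retract (prod_alg J F) M"
    and bij: "bij_betw g {0..<2::nat} M"
    and hom: "is_hom (cyc 2) (M, snd (prod_alg J F)) g"
    unfolding in_IRP_def iso_alg_def cyc_def by auto
  have FJ: "\<And>j. j \<in> J \<Longrightarrow> F j = (A, f)" using F by auto
  define P where "P = (\<lambda>x. \<lambda>j\<in>J. f (x j))"
  have sndP: "snd (prod_alg J F) = P" unfolding P_def prod_alg_def using FJ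
    by (auto intro!: ext)
  have MP: "M \<subseteq> PiE J (\<lambda>_. A)" using R FJ unfolding is_retract_def prod_alg_def
    by (auto simp: PiE_def Pi_def)
  have Hh: "\<And>x. x < 2 \<Longrightarrow> g ((x+1) mod 2) = P (g x)"
    using hom unfolding is_hom_def cyc_def sndP by auto
  have g1: "g 1 = P (g 0)" using Hh[of 0] by simp
  have g0: "g 0 = P (g 1)" using Hh[of 1] by simp
  have inj: "inj_on g {0..<2::nat}" using bij unfolding bij_betw_def by blast
  have ne: "g 0 \<noteq> g 1" using inj_onD[OF inj, of 0 1] by auto
  have "g 0 \<in> M" using bij unfolding bij_betw_def by auto
  then have g0M: "g 0 \<in> PiE J (\<lambda>_. A)" using MP by blast
  have "\<exists>j\<in>J. f (g 0 j) \<noteq> g 0 j"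
  proof (rule ccontr)
    assume "\<not> ?thesis"
    then have "\<And>j. j \<in> J \<Longrightarrow> f (g 0 j) = g 0 j" by blast
    moreover have "\<And>j. j \<notin> J \<Longrightarrow> g 0 j = undefined" using g0M by (simp add: PiE_def extensional_def)
    ultimately have "P (g 0) = g 0" unfolding P_def by (intro ext) simp
    then show False using ne g1 by simp
  qed
  then obtain j where j: "j \<in> J" "f (g 0 j) \<noteq> g 0 j" by blast
  have "g 0 = P (P (g 0))" using g0 g1 by metis
  then have "g 0 j = P (P (g 0)) j" by simp
  also have "\<dots> = f (f (g 0 j))" using j unfolding P_def by simp
  finally have "g 0 j = f (f (g 0 j))" .
  moreover have "g 0 j \<in> A" using g0M j by auto
  ultimately show ?thesis using j by metis
qed

lemma cyc3_elem:
  assumes mon: "monounary (A, f)" and h: "in_IRP {(A, f)} J (cyc 3)"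
  shows "\<exists>a\<in>A. f (f (f a)) = a"
proof -
  from h obtain F M g where F: "\<forall>j\<in>J. F j \<in> {(A, f)}"
    and R: "is_retract (prod_alg J F) M"
    and bij: "bij_betw g {0..<3::nat} M"
    and hom: "is_hom (cyc 3) (M, snd (prod_alg J F)) g"
    unfolding in_IRP_def iso_alg_def cyc_def by auto
  have FJ: "\<And>j. j \<in> J \<Longrightarrow> F j = (A, f)" using F by auto
  define P where "P = (\<lambda>x. \<lambda>j\<in>J. f (x j))"
  have sndP: "snd (prod_alg J F) = P" unfolding P_def prod_alg_def using FJ
    by (auto intro!: ext)
  have MP: "M \<subseteq> PiE J (\<lambda>_. A)" using R FJ unfolding is_retract_def prod_alg_def
    by (auto simp: PiE_def Pi_def)
  have Hh: "\<And>x. x < 3 \<Longrightarrow> g ((x+1) mod 3) = P (g x)"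
    using hom unfolding is_hom_def cyc_def sndP by auto
  have g1: "g 1 = P (g 0)" using Hh[of 0] by simp
  have g2: "g 2 = P (g 1)" using Hh[of 1] by (simp add: numeral_2_eq_2)
  have g0: "g 0 = P (g 2)" using Hh[of 2] by simp
  have inj: "inj_on g {0..<3::nat}" using bij unfolding bij_betw_def by blast
  have ne: "g 0 \<noteq> g 1" using inj_onD[OF inj, of 0 1] by auto
  have "g 0 \<in> M" using bij unfolding bij_betw_def by auto
  then have g0M: "g 0 \<in> PiE J (\<lambda>_. A)" using MP by blast
  have "J \<noteq> {}"
  proof
    assume "J = {}"
    then have "P (g 0) = g 0" using g0M unfolding P_def by auto
    then show False using ne g1 by simp
  qed
  then obtain j where j: "j \<in> J" by blast
  have "g 0 = P (P (P (g 0)))" using g0 g1 g2 by metis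
  then have "g 0 j = P (P (P (g 0))) j" by simp
  also have "\<dots> = f (f (f (g 0 j)))" using j unfolding P_def by simp
  finally have "g 0 j = f (f (f (g 0 j)))" .
  moreover have "g 0 j \<in> A" using g0M j by auto
  ultimately show ?thesis by metis
qed

theorem proposition2p1:
  fixes A :: "'a set" and f :: "'a \<Rightarrow> 'a"
    and I :: "'i set" and J :: "'j set" and L :: "'l set"
  assumes "monounary (A, f)"
  shows "\<not> (in_IRP {cyc 2, cyc 3} I (A, f) \<and> in_IRP {(A, f)} J (cyc 2) \<and> in_IRP {(A, f)} L (cyc 3))"
proof
  assume H: "in_IRP {cyc 2, cyc 3} I (A, f) \<and> in_IRP {(A, f)} J (cyc 2) \<and> in_IRP {(A, f)} L (cyc 3)"
  obtain a where a: "a \<in> A" "f a \<noteq> a" "f (f a) = a" using cyc2_elem[OF assms] H by blast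
  obtain b where b: "b \<in> A" "f (f (f b)) = b" using cyc3_elem[OF assms] H by blast
  from H obtain F M g where F: "\<forall>i\<in>I. F i \<in> {cyc 2, cyc 3}"
    and R: "is_retract (prod_alg I F) M"
    and bij: "bij_betw g A M"
    and hom: "is_hom (A, f) (M, snd (prod_alg I F)) g"
    unfolding in_IRP_def iso_alg_def by auto
  define P where "P = (\<lambda>x. \<lambda>i\<in>I. snd (F i) (x i))"
  have sndP: "snd (prod_alg I F) = P" unfolding P_def prod_alg_def by simp
  have MP: "M \<subseteq> PiE I (\<lambda>i. fst (F i))" using R unfolding is_retract_def prod_alg_def by auto
  have gh: "\<And>x. x \<in> A \<Longrightarrow> g (f x) = P (g x)" using hom sndP unfolding is_hom_def by auto
  have fA: "\<And>x. x \<in> A \<Longrightarrow> f x \<in> A" using assms unfolding monounary_def by auto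
  have ga: "g a = P (P (g a))" using gh a fA by metis
  have gb: "g b = P (P (P (g b)))" using gh b fA by metis
  have gaM: "g a \<in> PiE I (\<lambda>i. fst (F i))" and gbM: "g b \<in> PiE I (\<lambda>i. fst (F i))"
    using bij MP a b unfolding bij_betw_def by auto
  show False
  proof (cases "I = {}")
    case True
    have "g a = g (f a)" using gaM bij MP fA[OF a(1)] True unfolding bij_betw_def by auto
    then show False using bij a fA unfolding bij_betw_def inj_on_def by metis
  next
    case False
    then obtain i where i: "i \<in> I" by blast
    from ga have "g a i = P (P (g a)) i" by (rule fun_cong)
    also have "\<dots> = snd (F i) (snd (F i) (g a i))" using i unfolding P_def by simp
    finally have ea: "g a i = snd (F i) (snd (F i) (g a i))" .
    from gb have "g b i = P (P (P (g b))) i" by (rule fun_cong)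
    also have "\<dots> = snd (F i) (snd (F i) (snd (F i) (g b i)))" using i unfolding P_def by simp
    finally have eb: "g b i = snd (F i) (snd (F i) (snd (F i) (g b i)))" .
    have ia: "g a i \<in> fst (F i)" and ib: "g b i \<in> fst (F i)" using gaM gbM i by auto
    from F i have "F i = cyc 2 \<or> F i = cyc 3" by auto
    then show False
    proof
      assume c: "F i = cyc 2"
      then have "g b i < 2" "g b i = ((((g b i + 1) mod 2) + 1) mod 2 + 1) mod 2"
        using eb ib unfolding cyc_def by auto
      then show False by presburger
    next
      assume c: "F i = cyc 3"
      then have "g a i < 3" "g a i = (((g a i + 1) mod 3) + 1) mod 3"
        using ea ia unfolding cyc_def by auto
      then show False by presburger
    qed
  qed
qed

end
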